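(* For fixed $y,\eta\in(0,\infty)$, the function $\lambda\mapsto G_2(y,\eta,\lambda)$, given for $\lambda\in\mathbb{C}\setminus\mathbb{R}$ and $0<y\le\eta$ by $$G_2(y,\eta,\lambda)=\frac{w_1(\lambda,y)w_1(\lambda,\eta)}{2\alpha\,a(\lambda)}+\frac{w_2(\lambda,y)w_1(\lambda,\eta)}{2\alpha}$$ (and symmetrically for $y>\eta$), extends to a holomorphic function on $\mathbb{C}\setminus[\frac14,\infty)$; its only singularities lie on the branch cut $[\frac14,\infty)$.
   Context: $P(y)=\frac{e^{4y}+10e^{2y}+1}{4(e^{2y}-1)^2}$. For $\lambda\in\mathbb{C}$ write $\frac14-\lambda=re^{i\phi}$ with $r\ge0$, $\phi\in[-\pi,\pi)$, and $\alpha=\sqrt r\,e^{i\phi/2}$. Define $a(\lambda)=-\dfrac{\Gamma(1+\alpha)\Gamma(\frac32-\alpha)}{\Gamma(1-\alpha)\Gamma(\frac32+\alpha)}$, $w_1(\lambda,y)=e^{(1-\alpha)y}(e^{2y}-1)^{-1/2}\,{}_2F_1(-\tfrac12,-\tfrac12+\alpha;1+\alpha;e^{-2y})$, $w_2(\lambda,y)=e^{(1+\alpha)y}(e^{2y}-1)^{-1/2}\,{}_2F_1(-\tfrac12,-\tfrac12-\alpha;1-\alpha;e^{-2y})$. $G_2$ is the Green's function of $\frac{d^2}{dy^2}-P(y)+\lambda$ on $(0,\infty)$. *)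

theory Defs
  imports "HOL-Analysis.Analysis"
begin

definition hyp2f1 :: "complex \<Rightarrow> complex \<Rightarrow> complex \<Rightarrow> complex \<Rightarrow> complex" where
  "hyp2f1 a b c z =
     (\<Sum>n. pochhammer a n * pochhammer b n / (pochhammer c n * fact n) * z ^ n)"

text \<open>The paper's square-root convention: 1/4 - lambda = r e^{i phi}, phi in [-pi,pi),
  alpha = sqrt r e^{i phi/2}.  Isabelle's Arg takes values in (-pi,pi], so the value pi
  is moved to -pi.\<close>
definition phase :: "complex \<Rightarrow> real" where
  "phase z = (if Arg z = pi then - pi else Arg z)"

definition alpha :: "complex \<Rightarrow> complex" where
  "alpha lam = complex_of_real (sqrt (cmod (1/4 - lam))) * exp (\<i> * complex_of_real (phase (1/4 - lam) / 2))"

definition a_coef :: "complex \<Rightarrow> complex" where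
  "a_coef lam = - (Gamma (1 + alpha lam) * Gamma (3/2 - alpha lam)) /
                   (Gamma (1 - alpha lam) * Gamma (3/2 + alpha lam))"

definition w1 :: "complex \<Rightarrow> real \<Rightarrow> complex" where
  "w1 lam y = exp ((1 - alpha lam) * complex_of_real y)
      * complex_of_real ((exp (2*y) - 1) powr (-1/2))
      * hyp2f1 (-1/2) (-1/2 + alpha lam) (1 + alpha lam) (complex_of_real (exp (-2*y)))"

definition w2 :: "complex \<Rightarrow> real \<Rightarrow> complex" where
  "w2 lam y = exp ((1 + alpha lam) * complex_of_real y)
      * complex_of_real ((exp (2*y) - 1) powr (-1/2))
      * hyp2f1 (-1/2) (-1/2 - alpha lam) (1 - alpha lam) (complex_of_real (exp (-2*y)))"

definition G2 :: "real \<Rightarrow> real \<Rightarrow> complex \<Rightarrow> complex" where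
  "G2 y eta lam =
     (if y \<le> eta then
        w1 lam y * w1 lam eta / (2 * alpha lam * a_coef lam) + w2 lam y * w1 lam eta / (2 * alpha lam)
      else
        w1 lam eta * w1 lam y / (2 * alpha lam * a_coef lam) + w2 lam eta * w1 lam y / (2 * alpha lam))"

end

theory Submission
  imports Defs "HOL-Complex_Analysis.Complex_Analysis"
begin

lemma poch_nonneg0: "0 \<le> x \<Longrightarrow> 0 \<le> pochhammer (x::real) n"
  by (simp add: pochhammer_prod prod_nonneg)

lemma norm_poch_le: "norm (pochhammer (x::complex) k) \<le> pochhammer (norm x) k"
proof (induction k)
  case (Suc k)
  have "norm (pochhammer x (Suc k)) = norm (pochhammer x k) * norm (x + of_nat k)"
    by (simp add: pochhammer_Suc norm_mult)
  also have "\<dots> \<le> pochhammer (norm x) k * (norm x + of_nat k)"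
    by (intro mult_mono Suc.IH) (auto intro: poch_nonneg0 norm_triangle_le simp: norm_of_nat)
  finally show ?case by (simp add: pochhammer_Suc)
qed simp

lemma poch_half_le: "pochhammer (1/2::real) k \<le> fact k"
proof (induction k)
  case (Suc k)
  have "pochhammer (1/2::real) (Suc k) = pochhammer (1/2) k * (1/2 + real k)" by (simp add: pochhammer_Suc)
  also have "\<dots> \<le> fact k * (real k + 1)" by (intro mult_mono Suc.IH) (auto intro: poch_nonneg0)
  finally show ?case by (simp add: algebra_simps)
qed simp

lemma norm_poch_ge: assumes "Re w \<ge> 1" shows "fact m \<le> norm (pochhammer (w::complex) m)"
proof (induction m)
  case (Suc m)
  have "real (Suc m) \<le> Re (w + of_nat m)" using assms by simp
  also have "\<dots> \<le> norm (w + of_nat m)" by (rule complex_Re_le_cmod)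
  finally have h: "real (Suc m) \<le> norm (w + of_nat m)" .
  have "fact (Suc m) = (fact m :: real) * real (Suc m)" by simp
  also have "\<dots> \<le> norm (pochhammer w m) * norm (w + of_nat m)"
    by (intro mult_mono Suc.IH h) auto
  finally show ?case by (simp add: pochhammer_Suc norm_mult)
qed simp

lemma norm_poch_mhalf: "norm (pochhammer (-1/2::complex) k) \<le> fact k"
proof -
  have "norm (pochhammer (-1/2::complex) k) \<le> pochhammer (norm (-1/2::complex)) k" by (rule norm_poch_le)
  also have "norm (-1/2::complex) = 1/2" by simp
  finally show ?thesis using poch_half_le[of k] by simp
qed

lemma poch_mono0: "0 \<le> x \<Longrightarrow> x \<le> y \<Longrightarrow> pochhammer (x::real) n \<le> pochhammer y n"
  unfolding pochhammer_prod by (intro prod_mono) auto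

lemma summ_M:
  fixes z R :: real
  assumes z: "0 \<le> z" "z < 1" and R: "0 \<le> R"
  shows "summable (\<lambda>k. pochhammer R k * z^k / fact (k - N))"
proof -
  define c where "c = (1 + z) / 2"
  have cz: "z < c" "c < 1" using z by (auto simp: c_def)
  obtain K :: nat where K: "(R * z + c * N) / (c - z) < real K"
    using reals_Archimedean2 by blast
  define K' where "K' = max K N"
  show ?thesis
  proof (rule summable_ratio_test[of c K'])
    show "c < 1" by fact
    fix k assume k: "K' \<le> k"
    hence kN: "N \<le> k" and kK: "K \<le> k" by (auto simp: K'_def)
    have Suc: "Suc k - N = Suc (k - N)" using kN by simp
    have "real K \<le> real k" using kK by simp
    hence "(R * z + c * N) / (c - z) < real k" using K by linarith
    hence "R * z + c * N < real k * (c - z)" using cz by (simp add: pos_divide_less_eq)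
    hence ineq: "(R + real k) * z \<le> c * (real k + 1 - real N)" using cz(1) z(1)
      by (simp add: algebra_simps)
    have pos: "0 \<le> pochhammer R k * z^k / fact (k - N)"
      using z R by (intro divide_nonneg_pos mult_nonneg_nonneg poch_nonneg0 zero_le_power) auto
    have "pochhammer R (Suc k) * z^(Suc k) / fact (Suc k - N)
        = (pochhammer R k * z^k / fact (k - N)) * ((R + real k) * z / (real k + 1 - real N))"
    proof -
      have f: "fact (Suc k - N) = (fact (k - N) :: real) * (real k + 1 - real N)"
        using kN by (simp add: Suc of_nat_diff)
      have "real k + 1 - real N > 0" using kN by simp
      then show ?thesis unfolding f pochhammer_Suc power_Suc by (simp add: field_simps)
    qed
    also have "\<dots> \<le> (pochhammer R k * z^k / fact (k - N)) * c"
    proof (intro mult_left_mono pos)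
      have "real k + 1 - real N > 0" using kN by simp
      then show "(R + real k) * z / (real k + 1 - real N) \<le> c" using ineq by (simp add: divide_le_eq)
    qed
    finally show "norm (pochhammer R (Suc k) * z^(Suc k) / fact (Suc k - N))
        \<le> c * norm (pochhammer R k * z^k / fact (k - N))"
      using pos z R by (simp add: mult.commute poch_nonneg0)
  qed
qed

definition tm :: "complex \<Rightarrow> complex \<Rightarrow> real \<Rightarrow> nat \<Rightarrow> complex" where
  "tm b c z k = pochhammer (-1/2) k * pochhammer b k * rGamma (c + of_nat k) / fact k * of_real z ^ k"

definition hreg :: "complex \<Rightarrow> complex \<Rightarrow> real \<Rightarrow> complex" where
  "hreg b c z = suminf (tm b c z)"

lemma hreg_uniform:
  fixes s b0 c0 x :: complex and z :: real
  assumes z: "0 \<le> z" "z < 1"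
  shows "uniform_limit (cball x 1) (\<lambda>n \<alpha>. \<Sum>i<n. tm (b0+s*\<alpha>) (c0+s*\<alpha>) z i)
           (\<lambda>\<alpha>. hreg (b0+s*\<alpha>) (c0+s*\<alpha>) z) sequentially"
proof -
  define R where "R = norm x + 1"
  define R' where "R' = norm b0 + norm s * R"
  define N where "N = nat \<lceil>\<bar>Re c0\<bar> + norm s * R\<rceil> + 1"
  have R'0: "0 \<le> R'" unfolding R'_def R_def by simp
  have normR: "norm \<alpha> \<le> R" if "\<alpha> \<in> cball x 1" for \<alpha>
    using that norm_triangle_ineq2[of \<alpha> x] unfolding R_def by (auto simp: dist_norm norm_minus_commute)
  have "compact ((\<lambda>\<alpha>. rGamma (c0 + s*\<alpha> + of_nat N)) ` cball x 1)"
    by (intro compact_continuous_image holomorphic_on_imp_continuous_on) (auto intro!: holomorphic_intros)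
  hence "bounded ((\<lambda>\<alpha>. rGamma (c0 + s*\<alpha> + of_nat N)) ` cball x 1)" by (rule compact_imp_bounded)
  then obtain B where B0: "\<forall>y \<in> (\<lambda>\<alpha>. rGamma (c0 + s*\<alpha> + of_nat N)) ` cball x 1. norm y \<le> B"
    unfolding bounded_iff by (elim exE) (rule that)
  have B: "\<And>\<alpha>. \<alpha> \<in> cball x 1 \<Longrightarrow> norm (rGamma (c0 + s*\<alpha> + of_nat N)) \<le> B"
    using B0 by blast
  have Bnn: "0 \<le> B" using B[of x] by (meson centre_in_cball norm_ge_zero order_trans zero_le_one)
  define M where "M k = B * (pochhammer R' k * z^k / fact (k - N))" for k
  have summM: "summable M" unfolding M_def by (intro summable_mult summ_M z R'0)
  have bound: "\<forall>\<^sub>F k in sequentially. \<forall>\<alpha>\<in>cball x 1. norm (tm (b0+s*\<alpha>) (c0+s*\<alpha>) z k) \<le> M k"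
    unfolding eventually_sequentially
  proof (intro exI[of _ N] allI impI ballI)
    fix k \<alpha> assume k: "N \<le> k" and \<alpha>: "\<alpha> \<in> cball x 1"
    define c where "c = c0 + s*\<alpha>"
    define b where "b = b0 + s*\<alpha>"
    have "Re (s*\<alpha>) \<ge> - (norm s * R)"
    proof -
      have "- Re (s*\<alpha>) \<le> norm (s*\<alpha>)" using abs_Re_le_cmod[of "s*\<alpha>"] by linarith
      also have "\<dots> \<le> norm s * R" unfolding norm_mult by (intro mult_left_mono normR \<alpha>) auto
      finally show ?thesis by linarith
    qed
    moreover have "real N \<ge> \<bar>Re c0\<bar> + norm s * R + 1" unfolding N_def by linarith
    ultimately have ReN: "Re (c + of_nat N) \<ge> 1" unfolding c_def by simp
    have pne: "norm (pochhammer (c + of_nat N) (k - N)) \<ge> fact (k - N)"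
      by (rule norm_poch_ge[OF ReN])
    hence pnz: "pochhammer (c + of_nat N) (k - N) \<noteq> 0" by (metis fact_gt_zero norm_zero not_le)
    have "rGamma (c + of_nat N) = pochhammer (c + of_nat N) (k - N) * rGamma (c + of_nat k)"
      using pochhammer_rGamma[of "c + of_nat N" "k - N"] k by (simp add: of_nat_diff add.assoc)
    hence rG: "rGamma (c + of_nat k) = rGamma (c + of_nat N) / pochhammer (c + of_nat N) (k - N)"
      using pnz by (simp add: field_simps)
    have nrG: "norm (rGamma (c + of_nat k)) \<le> B / fact (k - N)"
    proof -
      have "norm (rGamma (c + of_nat k)) = norm (rGamma (c + of_nat N)) / norm (pochhammer (c + of_nat N) (k - N))"
        by (simp add: rG norm_divide)
      also have "\<dots> \<le> B / fact (k - N)"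
        using B[OF \<alpha>] pne Bnn by (intro frac_le) (auto simp: c_def)
      finally show ?thesis .
    qed
    have nb: "norm (pochhammer b k) \<le> pochhammer R' k"
    proof -
      have "norm b \<le> R'" unfolding b_def R'_def
        by (rule order_trans[OF norm_triangle_ineq]) (auto simp: norm_mult intro!: mult_left_mono normR \<alpha>)
      then show ?thesis using norm_poch_le[of b k] poch_mono0[of "norm b" R' k] by auto
    qed
    have "norm (tm b c z k) = norm (pochhammer (-1/2::complex) k) * norm (pochhammer b k)
          * norm (rGamma (c + of_nat k)) / fact k * z ^ k"
      unfolding tm_def using z by (simp add: norm_mult norm_divide norm_power)
    also have "\<dots> \<le> fact k * pochhammer R' k * (B / fact (k - N)) / fact k * z ^ k"
      by (intro mult_right_mono divide_right_mono mult_mono norm_poch_mhalf nb nrG)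
         (auto simp: z Bnn intro!: poch_nonneg0 R'0 mult_nonneg_nonneg)
    also have "\<dots> = M k" unfolding M_def by simp
    finally show "norm (tm (b0+s*\<alpha>) (c0+s*\<alpha>) z k) \<le> M k" by (simp add: b_def c_def)
  qed
  show ?thesis unfolding hreg_def by (rule Weierstrass_m_test_ev[OF bound summM])
qed

lemma hreg_holo:
  fixes s b0 c0 :: complex and z :: real
  assumes z: "0 \<le> z" "z < 1"
  shows "(\<lambda>\<alpha>. hreg (b0+s*\<alpha>) (c0+s*\<alpha>) z) holomorphic_on A"
proof -
  have "(\<lambda>\<alpha>. hreg (b0+s*\<alpha>) (c0+s*\<alpha>) z) holomorphic_on UNIV"
  proof (rule holomorphic_uniform_sequence[where f = "\<lambda>n \<alpha>. \<Sum>i<n. tm (b0+s*\<alpha>) (c0+s*\<alpha>) z i"])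
    fix n
    show "(\<lambda>\<alpha>. \<Sum>i<n. tm (b0+s*\<alpha>) (c0+s*\<alpha>) z i) holomorphic_on UNIV"
      unfolding tm_def pochhammer_prod by (intro holomorphic_intros) auto
  next
    fix x :: complex assume "x \<in> UNIV"
    show "\<exists>d>0. cball x d \<subseteq> UNIV \<and> uniform_limit (cball x d)
            (\<lambda>n \<alpha>. \<Sum>i<n. tm (b0+s*\<alpha>) (c0+s*\<alpha>) z i) (\<lambda>\<alpha>. hreg (b0+s*\<alpha>) (c0+s*\<alpha>) z) sequentially"
      using hreg_uniform[OF z] by (intro exI[of _ 1]) auto
  qed simp
  then show ?thesis by (rule holomorphic_on_subset) auto
qed

lemma hreg_sums:
  assumes z: "0 \<le> z" "z < 1"
  shows "tm b c z sums hreg b c z"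
proof -
  have U: "uniform_limit (cball 0 1) (\<lambda>n \<alpha>. \<Sum>i<n. tm (b+0*\<alpha>) (c+0*\<alpha>) z i)
      (\<lambda>\<alpha>. hreg (b+0*\<alpha>) (c+0*\<alpha>) z) sequentially" by (rule hreg_uniform[OF z])
  have "((\<lambda>n. \<Sum>i<n. tm (b+0*0) (c+0*0) z i) \<longlongrightarrow> hreg (b+0*0) (c+0*0) z) sequentially"
    using tendsto_uniform_limitI[OF U, of 0] by simp
  then show ?thesis by (simp add: sums_def)
qed

lemma hreg_summable: "0 \<le> z \<Longrightarrow> z < 1 \<Longrightarrow> summable (tm b c z)"
  using hreg_sums by (blast intro: sums_summable)

lemma hyp2f1_hreg:
  assumes z: "0 \<le> z" "z < 1" and c: "c \<notin> \<int>\<^sub>\<le>\<^sub>0"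
  shows "hyp2f1 (-1/2) b c (of_real z) = Gamma c * hreg b c z"
proof -
  have "pochhammer (-1/2) n * pochhammer b n / (pochhammer c n * fact n) * of_real z ^ n
        = Gamma c * tm b c z n" for n
  proof -
    have pnz: "pochhammer c n \<noteq> 0" using c
      by (metis pochhammer_eq_0_imp_nonpos_Int)
    have "rGamma c = pochhammer c n * rGamma (c + of_nat n)" by (rule pochhammer_rGamma)
    hence "rGamma (c + of_nat n) = rGamma c / pochhammer c n" using pnz by (simp add: field_simps)
    moreover have "Gamma c * rGamma c = 1" using c by (simp add: rGamma_inverse_Gamma Gamma_nonzero)
    ultimately show ?thesis unfolding tm_def using pnz
      by (simp add: field_simps)
  qed
  hence "hyp2f1 (-1/2) b c (of_real z) = (\<Sum>n. Gamma c * tm b c z n)"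
    unfolding hyp2f1_def by simp
  also have "\<dots> = Gamma c * hreg b c z"
    unfolding hreg_def by (rule suminf_mult[OF hreg_summable[OF z]])
  finally show ?thesis .
qed

lemma div_holo:
  fixes D s :: "complex \<Rightarrow> complex"
  assumes S: "open S" and hD: "D holomorphic_on S" and hs: "s holomorphic_on S"
    and zer: "\<And>z. z \<in> S \<Longrightarrow> s z = 0 \<Longrightarrow> D z = 0 \<and> deriv s z \<noteq> 0"
  shows "\<exists>Q. Q holomorphic_on S \<and> (\<forall>z\<in>S. s z \<noteq> 0 \<longrightarrow> Q z = D z / s z)"
proof -
  define Q where "Q z = (if s z = 0 then deriv D z / deriv s z else D z / s z)" for z
  have "Q analytic_on S"
    unfolding analytic_on_def
  proof
    fix z assume zS: "z \<in> S"
    show "\<exists>e>0. Q holomorphic_on ball z e"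
    proof (cases "s z = 0")
      case False
      have "continuous_on S s" using hs by (rule holomorphic_on_imp_continuous_on)
      hence "isCont s z" using S zS by (simp add: continuous_on_eq_continuous_at)
      from continuous_at_avoid[OF this False] obtain e where e0: "e > 0" "\<forall>w. dist z w < e \<longrightarrow> s w \<noteq> 0"
        by blast
      hence e: "e > 0" "\<And>w. dist w z < e \<Longrightarrow> s w \<noteq> 0" by (auto simp: dist_commute)
      obtain e' where e': "e' > 0" "ball z e' \<subseteq> S" using S zS openE by blast
      have "(\<lambda>w. D w / s w) holomorphic_on ball z (min e e')"
        using e e' by (intro holomorphic_intros holomorphic_on_subset[OF hD] holomorphic_on_subset[OF hs])
          (auto simp: dist_commute)
      hence "Q holomorphic_on ball z (min e e')"
        by (rule holomorphic_transform) (use e in \<open>auto simp: Q_def dist_commute\<close>)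
      then show ?thesis using e e' by (intro exI[of _ "min e e'"]) auto
    next
      case True
      define d1 where "d1 w = (if w = z then deriv D z else (D w - D z) / (w - z))" for w
      define s1 where "s1 w = (if w = z then deriv s z else (s w - s z) / (w - z))" for w
      have hd1: "d1 holomorphic_on S" unfolding d1_def by (rule pole_lemma_open[OF hD S])
      have hs1: "s1 holomorphic_on S" unfolding s1_def by (rule pole_lemma_open[OF hs S])
      have "s1 z \<noteq> 0" using zer[OF zS True] by (simp add: s1_def)
      have "continuous_on S s1" using hs1 by (rule holomorphic_on_imp_continuous_on)
      hence "isCont s1 z" using S zS by (simp add: continuous_on_eq_continuous_at)
      from continuous_at_avoid[OF this \<open>s1 z \<noteq> 0\<close>] obtain e where e0: "e > 0" "\<forall>w. dist z w < e \<longrightarrow> s1 w \<noteq> 0"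
        by blast
      hence e: "e > 0" "\<And>w. dist w z < e \<Longrightarrow> s1 w \<noteq> 0" by (auto simp: dist_commute)
      obtain e' where e': "e' > 0" "ball z e' \<subseteq> S" using S zS openE by blast
      have "(\<lambda>w. d1 w / s1 w) holomorphic_on ball z (min e e')"
        using e e' by (intro holomorphic_intros holomorphic_on_subset[OF hd1] holomorphic_on_subset[OF hs1])
          (auto simp: dist_commute)
      moreover have "d1 w / s1 w = Q w" if "w \<in> ball z (min e e')" for w
      proof (cases "w = z")
        case True
        then show ?thesis using \<open>s z = 0\<close> by (simp add: d1_def s1_def Q_def)
      next
        case False
        have "s1 w \<noteq> 0" using e that by (auto simp: dist_commute)
        hence sw: "s w \<noteq> 0" using False \<open>s z = 0\<close> by (auto simp: s1_def)
        have Dz: "D z = 0" using zer[OF zS True] by simp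
        show ?thesis using False sw Dz \<open>s z = 0\<close> by (simp add: d1_def s1_def Q_def field_simps)
      qed
      ultimately have "Q holomorphic_on ball z (min e e')" by (rule holomorphic_transform)
      then show ?thesis using e e' by (intro exI[of _ "min e e'"]) auto
    qed
  qed
  hence "Q holomorphic_on S" using S by (simp add: analytic_on_open)
  then show ?thesis by (intro exI[of _ Q]) (auto simp: Q_def)
qed

lemma KC:
  "pochhammer (-1/2::complex) n * pochhammer (-1/2 - of_nat n) n * rGamma (3/2 + of_nat n)
   = rGamma (3/2 - of_nat n)"
proof -
  have r1: "rGamma (3/2 - of_nat n :: complex) = pochhammer (3/2 - of_nat n) n * rGamma (3/2)"
    using pochhammer_rGamma[of "3/2 - of_nat n :: complex" n] by simp
  have r2: "rGamma (3/2 :: complex) = pochhammer (3/2) n * rGamma (3/2 + of_nat n)"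
    by (rule pochhammer_rGamma)
  have p1: "pochhammer (-1/2 - of_nat n :: complex) n = (-1)^n * pochhammer (3/2) n"
  proof -
    have "pochhammer (-(1/2 + of_nat n) :: complex) n = (-1)^n * pochhammer (1/2 + of_nat n - of_nat n + 1) n"
      by (rule pochhammer_minus)
    moreover have "-(1/2 + of_nat n) = (-1/2 - of_nat n :: complex)" by simp
    moreover have "1/2 + of_nat n - of_nat n + 1 = (3/2 :: complex)" by simp
    ultimately show ?thesis by simp
  qed
  have p2: "pochhammer (3/2 - of_nat n :: complex) n = (-1)^n * pochhammer (-1/2) n"
  proof -
    have "pochhammer (-(of_nat n - 3/2) :: complex) n = (-1)^n * pochhammer (of_nat n - 3/2 - of_nat n + 1) n"
      by (rule pochhammer_minus)
    moreover have "-(of_nat n - 3/2) = (3/2 - of_nat n :: complex)" by simp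
    moreover have "of_nat n - 3/2 - of_nat n + 1 = (-1/2 :: complex)" by simp
    ultimately show ?thesis by simp
  qed
  show ?thesis unfolding r1 r2 p1 p2 by (simp add: algebra_simps)
qed

lemma rGamma_1_plus_nat: "rGamma (1 + of_nat j :: complex) = inverse (fact j)"
  using Gamma_fact[of j, where 'a=complex] by (simp add: rGamma_inverse_Gamma)

lemma exp_z_pow:
  fixes t :: real
  shows "exp ((1 + of_nat n) * complex_of_real t) * (complex_of_real (exp (-2*t)))^n
         = exp ((1 - of_nat n) * complex_of_real t)"
proof -
  have "(complex_of_real (exp (-2*t)))^n = exp (complex_of_real (-2*t)) ^ n"
    by (simp only: exp_of_real)
  also have "\<dots> = exp (of_nat n * complex_of_real (-2*t))" by (rule exp_of_nat_mult[symmetric])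
  finally have "(complex_of_real (exp (-2*t)))^n = exp (of_nat n * complex_of_real (-2*t))" .
  hence "exp ((1 + of_nat n) * complex_of_real t) * (complex_of_real (exp (-2*t)))^n
       = exp ((1 + of_nat n) * complex_of_real t + of_nat n * complex_of_real (-2*t))"
    by (simp only: exp_add)
  also have "(1 + of_nat n) * complex_of_real t + of_nat n * complex_of_real (-2*t)
       = (1 - of_nat n) * complex_of_real t" by (simp add: algebra_simps)
  finally show ?thesis .
qed

lemma term_shift:
  fixes t :: real
  shows "exp ((1 + of_nat n) * complex_of_real t) * rGamma (3/2 + of_nat n)
           * tm (-1/2 - of_nat n) (1 - of_nat n) (exp (-2*t)) (j + n)
       = exp ((1 - of_nat n) * complex_of_real t) * rGamma (3/2 - of_nat n)
           * tm (-1/2 + of_nat n) (1 + of_nat n) (exp (-2*t)) j"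
proof -
  define z where "z = complex_of_real (exp (-2*t))"
  have g1: "rGamma (1 - of_nat n + of_nat (j + n) :: complex) = inverse (fact j)"
    using rGamma_1_plus_nat[of j] by (simp add: algebra_simps)
  have g2: "rGamma (1 + of_nat n + of_nat j :: complex) = inverse (fact (n + j))"
    using rGamma_1_plus_nat[of "n+j"] by (simp add: algebra_simps)
  have q1: "pochhammer (-1/2::complex) (j + n) = pochhammer (-1/2) n * pochhammer (-1/2 + of_nat n) j"
    using pochhammer_product'[of "-1/2::complex" n j] by (simp add: add.commute)
  have q2: "pochhammer (-1/2 - of_nat n::complex) (j + n) = pochhammer (-1/2 - of_nat n) n * pochhammer (-1/2) j"
    using pochhammer_product'[of "-1/2 - of_nat n::complex" n j] by (simp add: add.commute)
  have ez: "exp ((1 + of_nat n) * complex_of_real t) * z^n = exp ((1 - of_nat n) * complex_of_real t)"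
    unfolding z_def by (rule exp_z_pow)
  have "exp ((1 + of_nat n) * complex_of_real t) * rGamma (3/2 + of_nat n)
           * tm (-1/2 - of_nat n) (1 - of_nat n) (exp (-2*t)) (j + n)
     = (exp ((1 + of_nat n) * complex_of_real t) * z^n) *
       (pochhammer (-1/2::complex) n * pochhammer (-1/2 - of_nat n) n * rGamma (3/2 + of_nat n))
       * (pochhammer (-1/2 + of_nat n) j * pochhammer (-1/2) j * inverse (fact j) / fact (j+n) * z^j)"
    unfolding tm_def g1 q1 q2 z_def[symmetric] by (simp add: power_add field_simps)
  also have "\<dots> = exp ((1 - of_nat n) * complex_of_real t) * rGamma (3/2 - of_nat n)
       * (pochhammer (-1/2 + of_nat n) j * pochhammer (-1/2) j * inverse (fact j) / fact (j+n) * z^j)"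
    unfolding ez KC ..
  also have "\<dots> = exp ((1 - of_nat n) * complex_of_real t) * rGamma (3/2 - of_nat n)
           * tm (-1/2 + of_nat n) (1 + of_nat n) (exp (-2*t)) j"
    unfolding tm_def g2 z_def[symmetric] by (simp add: field_simps add.commute)
  finally show ?thesis .
qed

definition E1 :: "real \<Rightarrow> complex \<Rightarrow> complex" where
  "E1 t \<alpha> = exp ((1 - \<alpha>) * complex_of_real t) * complex_of_real ((exp (2*t) - 1) powr (-1/2))
     * hreg (-1/2 + \<alpha>) (1 + \<alpha>) (exp (-2*t))"

definition E2 :: "real \<Rightarrow> complex \<Rightarrow> complex" where
  "E2 t \<alpha> = exp ((1 + \<alpha>) * complex_of_real t) * complex_of_real ((exp (2*t) - 1) powr (-1/2))
     * hreg (-1/2 - \<alpha>) (1 - \<alpha>) (exp (-2*t))"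

definition DD :: "real \<Rightarrow> complex \<Rightarrow> complex" where
  "DD t \<alpha> = E2 t \<alpha> * rGamma (3/2 + \<alpha>) - E1 t \<alpha> * rGamma (3/2 - \<alpha>)"

lemma zfacts: "0 < t \<Longrightarrow> 0 \<le> exp (-2*t) \<and> exp (-2*t) < (1::real)"
  by auto

lemma E1_holo: "0 < t \<Longrightarrow> E1 t holomorphic_on A"
proof -
  assume t: "0 < t"
  have h: "(\<lambda>\<alpha>. hreg (-1/2 + 1*\<alpha>) (1 + 1*\<alpha>) (exp (-2*t))) holomorphic_on A"
    using zfacts[OF t] by (intro hreg_holo) auto
  show ?thesis unfolding E1_def[abs_def]
    by (intro holomorphic_intros) (use h in simp)
qed

lemma E2_holo: "0 < t \<Longrightarrow> E2 t holomorphic_on A"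
proof -
  assume t: "0 < t"
  have h: "(\<lambda>\<alpha>. hreg (-1/2 + (-1)*\<alpha>) (1 + (-1)*\<alpha>) (exp (-2*t))) holomorphic_on A"
    using zfacts[OF t] by (intro hreg_holo) auto
  have e: "(\<lambda>\<alpha>. hreg (-1/2 + (-1)*\<alpha>) (1 + (-1)*\<alpha>) (exp (-2*t))) = (\<lambda>\<alpha>. hreg (-1/2 - \<alpha>) (1 - \<alpha>) (exp (-2*t)))"
  proof
    fix \<alpha> :: complex
    have "(-1/2::complex) + (-1)*\<alpha> = -1/2 - \<alpha>" "(1::complex) + (-1)*\<alpha> = 1 - \<alpha>" by simp_all
    then show "hreg (-1/2 + (-1)*\<alpha>) (1 + (-1)*\<alpha>) (exp (-2*t)) = hreg (-1/2 - \<alpha>) (1 - \<alpha>) (exp (-2*t))"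
      by (simp only:)
  qed
  show ?thesis unfolding E2_def[abs_def]
    by (intro holomorphic_intros) (use h e in simp)
qed

lemma DD_holo: "0 < t \<Longrightarrow> DD t holomorphic_on A"
  unfolding DD_def[abs_def] by (intro holomorphic_intros E1_holo E2_holo)

lemma DD_zero:
  assumes t: "0 < t" and n: "n \<ge> 1"
  shows "DD t (of_nat n) = 0"
proof -
  define z where "z = exp (-2*t)"
  have z: "0 \<le> z" "z < 1" using t by (auto simp: z_def)
  let ?f = "tm (-1/2 - of_nat n) (1 - of_nat n) z"
  let ?g = "tm (-1/2 + of_nat n) (1 + of_nat n) z"
  define c2 where "c2 = exp ((1 + of_nat n) * complex_of_real t) * rGamma (3/2 + of_nat n)"
  define c1 where "c1 = exp ((1 - of_nat n) * complex_of_real t) * rGamma (3/2 - of_nat n)"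
  have zero: "?f i = 0" if "i < n" for i
  proof -
    have "1 - of_nat n + of_nat i = (- of_nat (n - 1 - i) :: complex)" using that n by (simp add: of_nat_diff)
    hence "rGamma (1 - of_nat n + of_nat i :: complex) = 0" by (simp add: rGamma_eq_zero_iff)
    then show ?thesis by (simp add: tm_def)
  qed
  have "hreg (-1/2 - of_nat n) (1 - of_nat n) z = (\<Sum>j. ?f (j + n)) + (\<Sum>i<n. ?f i)"
    unfolding hreg_def by (rule suminf_split_initial_segment[OF hreg_summable[OF z]])
  also have "(\<Sum>i<n. ?f i) = 0" using zero by simp
  finally have h2: "hreg (-1/2 - of_nat n) (1 - of_nat n) z = (\<Sum>j. ?f (j + n))" by simp
  have sf: "summable (\<lambda>j. ?f (j + n))"
    using hreg_summable[OF z] by (subst summable_iff_shift) 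
  have "c2 * hreg (-1/2 - of_nat n) (1 - of_nat n) z = (\<Sum>j. c2 * ?f (j + n))"
    unfolding h2 by (rule suminf_mult[OF sf, symmetric])
  also have "\<dots> = (\<Sum>j. c1 * ?g j)"
    unfolding c1_def c2_def z_def using term_shift[of n t] by simp
  also have "\<dots> = c1 * hreg (-1/2 + of_nat n) (1 + of_nat n) z"
    unfolding hreg_def by (rule suminf_mult[OF hreg_summable[OF z]])
  finally have key: "c2 * hreg (-1/2 - of_nat n) (1 - of_nat n) z = c1 * hreg (-1/2 + of_nat n) (1 + of_nat n) z" .
  show ?thesis
    unfolding DD_def E1_def E2_def z_def[symmetric]
    using key unfolding c1_def c2_def by (simp add: algebra_simps)
qed

lemma Im_not_nonpos_Int: "Im w \<noteq> 0 \<Longrightarrow> w \<notin> \<int>\<^sub>\<le>\<^sub>0"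
  by (auto elim!: nonpos_Ints_cases)

lemma alpha_csqrt:
  assumes "Im lam \<noteq> 0"
  shows "alpha lam = csqrt (1/4 - lam)"
proof -
  define w where "w = 1/4 - lam"
  have Imw: "Im w \<noteq> 0" using assms by (simp add: w_def)
  hence w0: "w \<noteq> 0" by auto
  have "Arg w \<noteq> pi" using Imw by (simp add: Arg_eq_pi)
  hence ph: "phase w = Arg w" by (simp add: phase_def)
  have "csqrt w = exp (Ln w / 2)" by (rule csqrt_exp_Ln[OF w0])
  also have "Ln w / 2 = complex_of_real (ln (norm w) / 2) + \<i> * complex_of_real (Arg w / 2)"
    using Ln_Arg[OF w0] by (simp add: field_simps)
  also have "exp \<dots> = exp (complex_of_real (ln (norm w) / 2)) * exp (\<i> * complex_of_real (Arg w / 2))"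
    by (rule exp_add)
  also have "exp (complex_of_real (ln (norm w) / 2)) = complex_of_real (sqrt (norm w))"
  proof -
    have "exp (ln (norm w) / 2) = sqrt (norm w)" using w0 by (simp add: powr_half_sqrt[symmetric] powr_def)
    then show ?thesis by (simp only: exp_of_real)
  qed
  finally show ?thesis unfolding alpha_def w_def[symmetric] ph by simp
qed

lemma Im_csqrt_nz: "Im w \<noteq> 0 \<Longrightarrow> Im (csqrt w) \<noteq> 0"
proof
  assume w: "Im w \<noteq> 0" and c: "Im (csqrt w) = 0"
  have "Im w = Im ((csqrt w)^2)" by simp
  also have "\<dots> = 2 * Re (csqrt w) * Im (csqrt w)" by (simp add: power2_eq_square del: power2_csqrt)
  finally show False using w c by (metis mult_zero_right)
qed

lemma Re_csqrt_pos: "w \<notin> \<real>\<^sub>\<le>\<^sub>0 \<Longrightarrow> 0 < Re (csqrt w)"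
proof (rule ccontr)
  assume w: "w \<notin> \<real>\<^sub>\<le>\<^sub>0" and "\<not> 0 < Re (csqrt w)"
  hence R: "Re (csqrt w) = 0" using Re_csqrt[of w] by linarith
  have "Re w = Re ((csqrt w)^2)" by simp
  also have "\<dots> = - (Im (csqrt w) * Im (csqrt w))" using R by (simp add: power2_eq_square del: power2_csqrt)
  finally have "Re w = - (Im (csqrt w) * Im (csqrt w))" .
  hence 1: "Re w \<le> 0" by (metis neg_le_0_iff_le zero_le_square)
  have "Im w = Im ((csqrt w)^2)" by simp
  also have "\<dots> = 0" using R by (simp add: power2_eq_square del: power2_csqrt)
  finally have 2: "Im w = 0" .
  from w 1 2 show False by (simp add: complex_nonpos_Reals_iff)
qed

lemma w1_E1:
  assumes "Im (alpha lam) \<noteq> 0" "0 < t"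
  shows "w1 lam t = Gamma (1 + alpha lam) * E1 t (alpha lam)"
proof -
  have c: "1 + alpha lam \<notin> \<int>\<^sub>\<le>\<^sub>0" using assms(1) by (intro Im_not_nonpos_Int) simp
  have "hyp2f1 (-1/2) (-1/2 + alpha lam) (1 + alpha lam) (complex_of_real (exp (-2*t)))
        = Gamma (1 + alpha lam) * hreg (-1/2 + alpha lam) (1 + alpha lam) (exp (-2*t))"
    using assms(2) by (intro hyp2f1_hreg c) auto
  then show ?thesis unfolding w1_def E1_def by (simp add: mult_ac)
qed

lemma w2_E2:
  assumes "Im (alpha lam) \<noteq> 0" "0 < t"
  shows "w2 lam t = Gamma (1 - alpha lam) * E2 t (alpha lam)"
proof -
  have c: "1 - alpha lam \<notin> \<int>\<^sub>\<le>\<^sub>0" using assms(1) by (intro Im_not_nonpos_Int) simp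
  have "hyp2f1 (-1/2) (-1/2 - alpha lam) (1 - alpha lam) (complex_of_real (exp (-2*t)))
        = Gamma (1 - alpha lam) * hreg (-1/2 - alpha lam) (1 - alpha lam) (exp (-2*t))"
    using assms(2) by (intro hyp2f1_hreg c) auto
  then show ?thesis unfolding w2_def E2_def by (simp add: mult_ac)
qed

lemma G2_core:
  fixes \<alpha> Gp Gm Hp Hm S e1m e1M e2m :: complex
  assumes nz: "\<alpha> \<noteq> 0" "Gp \<noteq> 0" "Gm \<noteq> 0" "Hp \<noteq> 0" "Hm \<noteq> 0" "S \<noteq> 0"
    and refl: "Gp * Gm = \<alpha> * of_real pi / S"
  shows "Gp * e1m * (Gp * e1M) / (2 * \<alpha> * (- (Gp * Hm) / (Gm * Hp))) + Gm * e2m * (Gp * e1M) / (2 * \<alpha>)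
       = of_real pi / 2 * Hp * e1M * (e2m * inverse Hp - e1m * inverse Hm) / S"
proof -
  have "Gp * e1m * (Gp * e1M) / (2 * \<alpha> * (- (Gp * Hm) / (Gm * Hp))) + Gm * e2m * (Gp * e1M) / (2 * \<alpha>)
      = (Gp * Gm) / (2*\<alpha>) * Hp * e1M * (e2m * inverse Hp - e1m * inverse Hm)"
    using nz by (simp add: field_simps)
  also have "\<dots> = of_real pi / 2 * Hp * e1M * (e2m * inverse Hp - e1m * inverse Hm) / S"
    unfolding refl using nz by (simp add: field_simps)
  finally show ?thesis .
qed

lemma G2_formula:
  assumes Im: "Im (alpha lam) \<noteq> 0" and y: "0 < y" and eta: "0 < eta"
  shows "G2 y eta lam = of_real pi / 2 * Gamma (3/2 + alpha lam) * E1 (max y eta) (alpha lam)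
           * DD (min y eta) (alpha lam) / sin (of_real pi * alpha lam)"
proof -
  define \<alpha> where "\<alpha> = alpha lam"
  have Ia: "Im \<alpha> \<noteq> 0" using Im by (simp add: \<alpha>_def)
  have a0: "\<alpha> \<noteq> 0" using Ia by auto
  have ni: "\<And>w. Im w \<noteq> 0 \<Longrightarrow> Gamma w \<noteq> 0" by (intro Gamma_nonzero Im_not_nonpos_Int)
  have Gp: "Gamma (1 + \<alpha>) \<noteq> 0" and Gm: "Gamma (1 - \<alpha>) \<noteq> 0" and Hp: "Gamma (3/2 + \<alpha>) \<noteq> 0"
    and Hm: "Gamma (3/2 - \<alpha>) \<noteq> 0" using Ia by (auto intro!: ni)
  have S: "sin (of_real pi * \<alpha>) \<noteq> 0"
  proof
    assume "sin (of_real pi * \<alpha>) = 0"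
    then obtain n :: int where "of_real pi * \<alpha> = of_real (of_int n * pi)" by (auto simp: sin_eq_0)
    hence "Im (of_real pi * \<alpha>) = 0" by simp
    with Ia show False by simp
  qed
  have refl: "Gamma (1 + \<alpha>) * Gamma (1 - \<alpha>) = \<alpha> * of_real pi / sin (of_real pi * \<alpha>)"
  proof -
    have "Gamma (\<alpha> + 1) = \<alpha> * Gamma \<alpha>" using Ia by (intro Gamma_plus1 Im_not_nonpos_Int)
    then have "Gamma (1 + \<alpha>) * Gamma (1 - \<alpha>) = \<alpha> * (Gamma \<alpha> * Gamma (1 - \<alpha>))"
      by (simp add: add.commute)
    also have "\<dots> = \<alpha> * (of_real pi / sin (of_real pi * \<alpha>))" by (simp only: Gamma_reflection_complex)
    finally show ?thesis by simp
  qed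
  have rG: "rGamma (3/2 + \<alpha>) = inverse (Gamma (3/2 + \<alpha>))" "rGamma (3/2 - \<alpha>) = inverse (Gamma (3/2 - \<alpha>))"
    by (simp_all add: rGamma_inverse_Gamma)
  show ?thesis
  proof (cases "y \<le> eta")
    case True
    show ?thesis
      unfolding G2_def a_coef_def if_P[OF True] w1_E1[OF Im y] w1_E1[OF Im eta] w2_E2[OF Im y]
        max_absorb2[OF True] min_absorb1[OF True] DD_def rG[unfolded \<alpha>_def]
      by (rule G2_core[OF a0 Gp Gm Hp Hm S refl, unfolded \<alpha>_def])
  next
    case False
      have F: "eta \<le> y" using False by simp
      show ?thesis
      unfolding G2_def a_coef_def if_not_P[OF False] w1_E1[OF Im y] w1_E1[OF Im eta] w2_E2[OF Im eta]
        max_absorb1[OF F] min_absorb2[OF F] DD_def rG[unfolded \<alpha>_def]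
      by (rule G2_core[OF a0 Gp Gm Hp Hm S refl, unfolded \<alpha>_def])
  qed
qed

lemma sin_pi_nz: "Im (\<alpha>::complex) \<noteq> 0 \<Longrightarrow> sin (of_real pi * \<alpha>) \<noteq> 0"
proof
  assume Ia: "Im \<alpha> \<noteq> 0" and "sin (of_real pi * \<alpha>) = 0"
  then obtain n :: int where "of_real pi * \<alpha> = of_real (of_int n * pi)" by (auto simp: sin_eq_0)
  hence "Im (of_real pi * \<alpha>) = 0" by simp
  with Ia show False by simp
qed

lemma sin_zero_cases:
  assumes "0 < Re z" "sin (of_real pi * z) = 0"
  obtains k :: nat where "k \<ge> 1" "z = of_nat k"
proof -
  obtain n :: int where n: "of_real pi * z = of_real (of_int n * pi)" using assms(2) by (auto simp: sin_eq_0)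
  hence "of_real pi * z = of_real pi * (of_int n :: complex)" by (simp add: mult.commute)
  hence zn: "z = of_int n" by simp
  hence "n > 0" using assms(1) by simp
  hence "z = of_nat (nat n)" "nat n \<ge> 1" using zn by auto
  then show ?thesis using that by blast
qed

theorem lemma4p3:
  fixes y eta :: real
  assumes "0 < y" and "0 < eta"
  shows "\<exists>g. g holomorphic_on (- (complex_of_real ` {1/4..})) \<and>
             (\<forall>lam. Im lam \<noteq> 0 \<longrightarrow> g lam = G2 y eta lam)"
proof -
  define m where "m = min y eta"
  define M where "M = max y eta"
  have m: "0 < m" and Mp: "0 < M" using assms by (auto simp: m_def M_def)
  define S where "S = {z::complex. Re z > 0}"
  have oS: "open S" unfolding S_def by (rule open_halfspace_Re_gt)
  have hs: "(\<lambda>z. sin (of_real pi * z)) holomorphic_on S" by (intro holomorphic_intros)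
  have zer: "DD m z = 0 \<and> deriv (\<lambda>z. sin (of_real pi * z)) z \<noteq> 0"
    if zS: "z \<in> S" and sz: "sin (of_real pi * z) = 0" for z
  proof -
    have Rz: "0 < Re z" using zS by (simp add: S_def)
    obtain k :: nat where k: "k \<ge> 1" "z = of_nat k"
      using sin_zero_cases[OF Rz sz] by blast
    have "DD m z = 0" using DD_zero[OF m k(1)] k(2) by simp
    moreover have "((\<lambda>z. sin (of_real pi * z)) has_field_derivative cos (of_real pi * z) * of_real pi) (at z)"
      by (auto intro!: derivative_eq_intros)
    hence "deriv (\<lambda>z. sin (of_real pi * z)) z = cos (of_real pi * z) * of_real pi"
      by (rule DERIV_imp_deriv)
    moreover have "cos (of_real pi * z) \<noteq> 0"
    proof -
      have "of_real pi * z = complex_of_real (real k * pi)" using k(2) by simp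
      hence "cos (of_real pi * z) = complex_of_real ((-1)^k)" by (simp only: cos_of_real cos_npi)
      then show ?thesis by simp
    qed
    ultimately show ?thesis by simp
  qed
  obtain Q where Q: "Q holomorphic_on S" "\<forall>z\<in>S. sin (of_real pi * z) \<noteq> 0 \<longrightarrow> Q z = DD m z / sin (of_real pi * z)"
    using div_holo[OF oS DD_holo[OF m] hs zer] by blast
  define F where "F \<alpha> = of_real pi / 2 * Gamma (3/2 + \<alpha>) * E1 M \<alpha> * Q \<alpha>" for \<alpha>
  have hF: "F holomorphic_on S"
    unfolding F_def[abs_def]
  proof (intro holomorphic_intros E1_holo[OF Mp] Q(1))
    fix \<alpha> assume "\<alpha> \<in> S"
    then have "Re (3/2 + \<alpha>) > 0" by (simp add: S_def)
    then show "3/2 + \<alpha> \<notin> \<int>\<^sub>\<le>\<^sub>0"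
    proof (safe elim!: nonpos_Ints_cases)
      fix n :: int assume "0 < Re (3/2 + \<alpha>)" "3/2 + \<alpha> = of_int n" "n \<le> 0"
      then have "Re (3/2 + \<alpha>) = Re (complex_of_int n)" by (simp only:)
      then have "Re (3/2 + \<alpha>) = of_int n" by simp
      with \<open>0 < Re (3/2 + \<alpha>)\<close> \<open>n \<le> 0\<close> show False by simp
    qed
  qed
  define T where "T = - (complex_of_real ` {1/4..})"
  have notR: "1/4 - lam \<notin> \<real>\<^sub>\<le>\<^sub>0" if "lam \<in> T" for lam
  proof
    assume "1/4 - lam \<in> \<real>\<^sub>\<le>\<^sub>0"
    hence "Im lam = 0" "Re lam \<ge> 1/4" by (auto simp: complex_nonpos_Reals_iff)
    hence "lam = complex_of_real (Re lam)" "Re lam \<in> {1/4..}" by (auto simp: complex_eq_iff)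
    hence "lam \<in> complex_of_real ` {1/4..}" by blast
    with that show False by (simp add: T_def)
  qed
  have hf: "(\<lambda>lam. csqrt (1/4 - lam)) holomorphic_on T"
    by (intro holomorphic_intros notR)
  have img: "(\<lambda>lam. csqrt (1/4 - lam)) ` T \<subseteq> S"
  proof
    fix u assume "u \<in> (\<lambda>lam. csqrt (1/4 - lam)) ` T"
    then obtain lam where "lam \<in> T" "u = csqrt (1/4 - lam)" by blast
    then show "u \<in> S" using Re_csqrt_pos[OF notR] unfolding S_def by blast
  qed
  have hg: "(F \<circ> (\<lambda>lam. csqrt (1/4 - lam))) holomorphic_on T"
    by (rule holomorphic_on_compose_gen[OF hf hF img])
  have agree: "(F \<circ> (\<lambda>lam. csqrt (1/4 - lam))) lam = G2 y eta lam" if Il: "Im lam \<noteq> 0" for lam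
  proof -
    have ac: "alpha lam = csqrt (1/4 - lam)" by (rule alpha_csqrt[OF Il])
    have Ia: "Im (alpha lam) \<noteq> 0" unfolding ac using Il by (intro Im_csqrt_nz) simp
    have "1/4 - lam \<notin> \<real>\<^sub>\<le>\<^sub>0" using Il by (simp add: complex_nonpos_Reals_iff)
    hence aS: "alpha lam \<in> S" unfolding ac S_def using Re_csqrt_pos by blast
    have sn: "sin (of_real pi * alpha lam) \<noteq> 0" by (rule sin_pi_nz[OF Ia])
    have "G2 y eta lam = of_real pi / 2 * Gamma (3/2 + alpha lam) * E1 M (alpha lam)
           * DD m (alpha lam) / sin (of_real pi * alpha lam)"
      unfolding M_def m_def by (rule G2_formula[OF Ia assms])
    also have "\<dots> = F (alpha lam)" unfolding F_def using Q(2) aS sn by simp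
    finally show ?thesis by (simp add: ac)
  qed
  show ?thesis
    using hg agree unfolding T_def by blast
qed

end
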